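(* Let $1>\delta_1>\delta_2>0$. Consider the S6V model with any boundary data having no arrow incoming from $(1,0)$, and let $Q$ be the second class particle starting from $(1,0)$. Let $x>10$ be an integer and let $y_Q$ be the height at which $Q$ crosses the line $\{(i,j):i=x+\frac12\}$. Then there are constants $C,c>0$ such that for all $k\ge100x\delta_1$, $$\mathbb{P}[y_Q\le x-k]\le C\mathrm{e}^{-ck}.$$
   Context: S6V model: vertices $(i,j)\in\mathbb{Z}_{>0}^2$ with incoming edges from left and below, outgoing to right and up; boundary data specify which edges $(0,j)\to(1,j)$ and $(i,0)\to(i,1)$ carry an arrow (incoming from $(0,j)$, resp. $(i,0)$). Vertices sampled on antidiagonals: none in gives none out; two in gives both out; a single arrow from below exits up w.p. $\delta_1$, right w.p. $1-\delta_1$; a single arrow from the left exits right w.p. $\delta_2$, up w.p. $1-\delta_2$. Second class particle from $v_0$: with $\xi_0^+$ equal to the boundary data plus an arrow from $v_0$, run both models with shared Bernoulli decisions at each vertex (basic coupling); edges present in the $\xi_0^+$ model but not in the original model form one up-right path from $v_0$. *)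

theory Defs
  imports "HOL-Probability.Probability"
begin

text \<open>Stochastic six-vertex (S6V) model on vertices (i,j) with i,j >= 1.
  Boundary data: L j = arrow on edge (0,j)->(1,j); B i = arrow on edge (i,0)->(i,1).
  Randomness: at each vertex v an independent pair of coins
  (c1, c2), c1 ~ Bernoulli(d1), c2 ~ Bernoulli(d2).
  c1 decides a single arrow from below (True = exits up),
  c2 decides a single arrow from the left (True = exits right).
  Output of a vertex is the pair (right edge occupied, up edge occupied).\<close>

definition vertex_rule :: "bool \<Rightarrow> bool \<Rightarrow> bool \<times> bool \<Rightarrow> bool \<times> bool" where
  "vertex_rule l b c =
     (if l \<and> b then (True, True)
      else if \<not> l \<and> \<not> b then (False, False)
      else if b then (\<not> fst c, fst c)
      else (snd c, \<not> snd c))"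

function s6v_out :: "(nat \<Rightarrow> bool) \<Rightarrow> (nat \<Rightarrow> bool) \<Rightarrow> (nat \<times> nat \<Rightarrow> bool \<times> bool)
    \<Rightarrow> nat \<Rightarrow> nat \<Rightarrow> bool \<times> bool" where
  "s6v_out L B \<omega> i j =
     vertex_rule
       (if i \<le> 1 then L j else fst (s6v_out L B \<omega> (i - 1) j))
       (if j \<le> 1 then B i else snd (s6v_out L B \<omega> i (j - 1)))
       (\<omega> (i, j))"
  by pat_completeness auto
termination
  by (relation "Wellfounded.measure (\<lambda>(L, B, \<omega>, i, j). i + j)") auto

definition s6v_space :: "real \<Rightarrow> real \<Rightarrow> (nat \<times> nat \<Rightarrow> bool \<times> bool) measure" where
  "s6v_space d1 d2 =
     PiM UNIV (\<lambda>_. measure_pmf (pair_pmf (bernoulli_pmf d1) (bernoulli_pmf d2)))"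

text \<open>Second class particle from v0 = (1,0): compare the model with boundary B and with
  boundary B(1 := True) under basic coupling. The horizontal edge (x,j)->(x+1,j) belongs
  to the path of the second class particle iff it is occupied in the plus model but not
  in the original model.\<close>
definition sc_right_edge :: "(nat \<Rightarrow> bool) \<Rightarrow> (nat \<Rightarrow> bool) \<Rightarrow> (nat \<times> nat \<Rightarrow> bool \<times> bool)
    \<Rightarrow> nat \<Rightarrow> nat \<Rightarrow> bool" where
  "sc_right_edge L B \<omega> x j \<longleftrightarrow>
     1 \<le> j \<and> fst (s6v_out L (B(1 := True)) \<omega> x j) \<and> \<not> fst (s6v_out L B \<omega> x j)"

end

theory Submission
  imports Defs
begin


definition lin where "lin L B \<omega> i j = (if i \<le> 1 then L j else fst (s6v_out L B \<omega> (i - 1) j))"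
definition bin where "bin L B \<omega> i j = (if j \<le> 1 then B i else snd (s6v_out L B \<omega> i (j - 1)))"

lemma out_eq: "s6v_out L B \<omega> i j = vertex_rule (lin L B \<omega> i j) (bin L B \<omega> i j) (\<omega> (i,j))"
  by (subst s6v_out.simps) (simp add: lin_def bin_def)

declare s6v_out.simps[simp del]

definition dR where "dR L B \<omega> i j = (fst (s6v_out L (B(1:=True)) \<omega> i j) \<and> \<not> fst (s6v_out L B \<omega> i j))"
definition dU where "dU L B \<omega> i j = (snd (s6v_out L (B(1:=True)) \<omega> i j) \<and> \<not> snd (s6v_out L B \<omega> i j))"
definition dLi where "dLi L B \<omega> i j = (lin L (B(1:=True)) \<omega> i j \<and> \<not> lin L B \<omega> i j)"
definition dBi where "dBi L B \<omega> i j = (bin L (B(1:=True)) \<omega> i j \<and> \<not> bin L B \<omega> i j)"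

lemma vr_mono: "(l \<longrightarrow> l') \<Longrightarrow> (b \<longrightarrow> b') \<Longrightarrow>
  (fst (vertex_rule l b c) \<longrightarrow> fst (vertex_rule l' b' c)) \<and> (snd (vertex_rule l b c) \<longrightarrow> snd (vertex_rule l' b' c))"
  by (cases l; cases b; cases l'; cases b'; cases c) (auto simp: vertex_rule_def)

lemma vr_cons: "(l \<longrightarrow> l') \<Longrightarrow> (b \<longrightarrow> b') \<Longrightarrow>
  of_bool (fst (vertex_rule l' b' c) \<and> \<not> fst (vertex_rule l b c)) + of_bool (snd (vertex_rule l' b' c) \<and> \<not> snd (vertex_rule l b c))
   = (of_bool (l' \<and> \<not> l) + of_bool (b' \<and> \<not> b) :: nat)"
  by (cases l; cases b; cases l'; cases b'; cases c) (auto simp: vertex_rule_def)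

lemma vr_single: "l' \<and> \<not> l \<Longrightarrow> b = b' \<Longrightarrow> fst (vertex_rule l' b' c) \<and> \<not> fst (vertex_rule l b c) \<Longrightarrow> fst c \<or> snd c"
  by (cases l; cases b; cases l'; cases b'; cases c) (auto simp: vertex_rule_def)

lemma out_mono: "(fst (s6v_out L B \<omega> i j) \<longrightarrow> fst (s6v_out L (B(1:=True)) \<omega> i j)) \<and>
   (snd (s6v_out L B \<omega> i j) \<longrightarrow> snd (s6v_out L (B(1:=True)) \<omega> i j))"
proof (induction "i+j" arbitrary: i j rule: less_induct)
  case less
  have l: "lin L B \<omega> i j \<longrightarrow> lin L (B(1:=True)) \<omega> i j"
  proof (cases "i \<le> 1")
    case True then show ?thesis by (simp add: lin_def)
  next
    case False then show ?thesis using less[of "i-1" j] by (simp add: lin_def)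
  qed
  have b: "bin L B \<omega> i j \<longrightarrow> bin L (B(1:=True)) \<omega> i j"
  proof (cases "j \<le> 1")
    case True then show ?thesis by (simp add: bin_def)
  next
    case False then show ?thesis using less[of i "j-1"] by (simp add: bin_def)
  qed
  show ?case by (subst (1 2 3 4) out_eq) (rule vr_mono[OF l b])
qed

lemma lin_mono: "lin L B \<omega> i j \<longrightarrow> lin L (B(1:=True)) \<omega> i j"
  using out_mono[of L B \<omega> "i-1" j] by (simp add: lin_def)
lemma bin_mono: "bin L B \<omega> i j \<longrightarrow> bin L (B(1:=True)) \<omega> i j"
  using out_mono[of L B \<omega> i "j-1"] by (simp add: bin_def)

lemma cons: "of_bool (dR L B \<omega> i j) + of_bool (dU L B \<omega> i j) = (of_bool (dLi L B \<omega> i j) + of_bool (dBi L B \<omega> i j) :: nat)"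
  unfolding dR_def dU_def dLi_def dBi_def
  by (subst (1 2 3 4) out_eq) (rule vr_cons[OF lin_mono bin_mono])

lemma dLi_eq: "dLi L B \<omega> i j = (2 \<le> i \<and> dR L B \<omega> (i-1) j)"
  by (auto simp: dLi_def dR_def lin_def)

lemma dBi_eq: "\<not> B 1 \<Longrightarrow> dBi L B \<omega> i j = (if j \<le> 1 then i = 1 else dU L B \<omega> i (j-1))"
  by (auto simp: dBi_def dU_def bin_def)

lemma single: "dLi L B \<omega> i j \<Longrightarrow> \<not> dBi L B \<omega> i j \<Longrightarrow> dR L B \<omega> i j \<Longrightarrow> fst (\<omega> (i,j)) \<or> snd (\<omega> (i,j))"
  using bin_mono[of L B \<omega> i j]
  unfolding dR_def dLi_def dBi_def
  by (subst (asm) (1 2) out_eq) (auto simp: vertex_rule_def split: if_splits)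

primrec pos :: "(nat \<Rightarrow> bool) \<Rightarrow> (nat \<Rightarrow> bool) \<Rightarrow> (nat \<times> nat \<Rightarrow> bool \<times> bool) \<Rightarrow> nat \<Rightarrow> nat \<times> nat" where
  "pos L B \<omega> 0 = (1,1)"
| "pos L B \<omega> (Suc t) = (if dR L B \<omega> (fst (pos L B \<omega> t)) (snd (pos L B \<omega> t))
      then (fst (pos L B \<omega> t) + 1, snd (pos L B \<omega> t)) else (fst (pos L B \<omega> t), snd (pos L B \<omega> t) + 1))"

definition mv where "mv L B \<omega> t = dR L B \<omega> (fst (pos L B \<omega> t)) (snd (pos L B \<omega> t))"

lemma pos_diag: "fst (pos L B \<omega> t) + snd (pos L B \<omega> t) = t + 2 \<and> 1 \<le> fst (pos L B \<omega> t) \<and> 1 \<le> snd (pos L B \<omega> t)"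
  by (induction t) auto

lemma inv:
  assumes nB: "\<not> B 1"
  shows "(dLi L B \<omega> (fst (pos L B \<omega> t)) (snd (pos L B \<omega> t)) \<noteq> dBi L B \<omega> (fst (pos L B \<omega> t)) (snd (pos L B \<omega> t)))
     \<and> (\<forall>a b. 1 \<le> a \<longrightarrow> 1 \<le> b \<longrightarrow> a + b = t + 2 \<longrightarrow> (a, b) \<noteq> pos L B \<omega> t \<longrightarrow> \<not> dLi L B \<omega> a b \<and> \<not> dBi L B \<omega> a b)"
proof (induction t)
  case 0
  show ?case using nB by (auto simp: dLi_eq dBi_eq)
next
  case (Suc t)
  obtain i j where p: "pos L B \<omega> t = (i, j)" by (cases "pos L B \<omega> t")
  have d: "i + j = t + 2" "1 \<le> i" "1 \<le> j" using pos_diag[of L B \<omega> t] p by auto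
  have one: "dLi L B \<omega> i j \<noteq> dBi L B \<omega> i j" using Suc.IH p by simp
  have oth: "\<And>a b. 1 \<le> a \<Longrightarrow> 1 \<le> b \<Longrightarrow> a + b = t + 2 \<Longrightarrow> (a, b) \<noteq> (i, j) \<Longrightarrow> \<not> dLi L B \<omega> a b \<and> \<not> dBi L B \<omega> a b"
    using Suc.IH p by auto
  have noout: "\<And>a b. 1 \<le> a \<Longrightarrow> 1 \<le> b \<Longrightarrow> a + b = t + 2 \<Longrightarrow> (a, b) \<noteq> (i, j) \<Longrightarrow> \<not> dR L B \<omega> a b \<and> \<not> dU L B \<omega> a b"
  proof -
    fix a b assume "1 \<le> a" "1 \<le> b" "a + b = t + 2" "(a, b) \<noteq> (i, j)"
    then have "\<not> dLi L B \<omega> a b \<and> \<not> dBi L B \<omega> a b" using oth by blast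
    then show "\<not> dR L B \<omega> a b \<and> \<not> dU L B \<omega> a b" using cons[of L B \<omega> a b] by auto
  qed
  have ex1: "dR L B \<omega> i j \<noteq> dU L B \<omega> i j" using cons[of L B \<omega> i j] one
    by (cases "dR L B \<omega> i j"; cases "dU L B \<omega> i j"; cases "dLi L B \<omega> i j"; cases "dBi L B \<omega> i j") auto
  show ?case
  proof (cases "dR L B \<omega> i j")
    case True
    then have ps: "pos L B \<omega> (Suc t) = (i+1, j)" using p by simp
    have nU: "\<not> dU L B \<omega> i j" using ex1 True by simp
    have A: "dLi L B \<omega> (i+1) j" using True d by (simp add: dLi_eq)
    have Bn: "\<not> dBi L B \<omega> (i+1) j"
    proof (cases "j \<le> 1")
      case True then show ?thesis using nB d by (simp add: dBi_eq)
    next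
      case False then show ?thesis using nB d noout[of "i+1" "j-1"] by (simp add: dBi_eq)
    qed
    have O: "\<not> dLi L B \<omega> a b \<and> \<not> dBi L B \<omega> a b" if "1 \<le> a" "1 \<le> b" "a + b = Suc t + 2" "(a, b) \<noteq> (i+1, j)" for a b
    proof
      show "\<not> dLi L B \<omega> a b"
        using that noout[of "a-1" b] by (auto simp: dLi_eq)
      show "\<not> dBi L B \<omega> a b"
      proof (cases "b \<le> 1")
        case True then show ?thesis using nB that d by (simp add: dBi_eq)
      next
        case False then show ?thesis using nB that d noout[of a "b-1"] nU
          by (cases "(a, b - 1) = (i, j)") (auto simp: dBi_eq)
      qed
    qed
    show ?thesis unfolding ps using A Bn O by auto
  next
    case False
    then have ps: "pos L B \<omega> (Suc t) = (i, j+1)" using p by simp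
    have U: "dU L B \<omega> i j" using ex1 False by simp
    have A: "dBi L B \<omega> i (j+1)" using U nB d by (simp add: dBi_eq)
    have Ln: "\<not> dLi L B \<omega> i (j+1)"
      using noout[of "i-1" "j+1"] d by (auto simp: dLi_eq)
    have O: "\<not> dLi L B \<omega> a b \<and> \<not> dBi L B \<omega> a b" if "1 \<le> a" "1 \<le> b" "a + b = Suc t + 2" "(a, b) \<noteq> (i, j+1)" for a b
    proof
      show "\<not> dLi L B \<omega> a b"
        using that noout[of "a-1" b] False
        by (cases "(a - 1, b) = (i, j)") (auto simp: dLi_eq)
      show "\<not> dBi L B \<omega> a b"
      proof (cases "b \<le> 1")
        case True then show ?thesis using nB that d by (simp add: dBi_eq)
      next
        case False then show ?thesis using nB that d noout[of a "b-1"]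
          by (auto simp: dBi_eq)
      qed
    qed
    show ?thesis unfolding ps using A Ln O by auto
  qed
qed

lemma ex1_at: "\<not> B 1 \<Longrightarrow> dR L B \<omega> (fst (pos L B \<omega> t)) (snd (pos L B \<omega> t)) \<noteq> dU L B \<omega> (fst (pos L B \<omega> t)) (snd (pos L B \<omega> t))"
  using inv[of B L \<omega> t] cons[of L B \<omega> "fst (pos L B \<omega> t)" "snd (pos L B \<omega> t)"]
  by (cases "dR L B \<omega> (fst (pos L B \<omega> t)) (snd (pos L B \<omega> t))";
      cases "dU L B \<omega> (fst (pos L B \<omega> t)) (snd (pos L B \<omega> t))";
      cases "dLi L B \<omega> (fst (pos L B \<omega> t)) (snd (pos L B \<omega> t))";
      cases "dBi L B \<omega> (fst (pos L B \<omega> t)) (snd (pos L B \<omega> t))") auto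

lemma hit:
  assumes nB: "\<not> B 1" and R: "dR L B \<omega> x j" and j: "1 \<le> j" and x: "1 \<le> x"
  shows "pos L B \<omega> (x + j - 2) = (x, j) \<and> mv L B \<omega> (x + j - 2)"
proof -
  define t where "t = x + j - 2"
  have tt: "x + 1 + j = Suc t + 2" using j x by (simp add: t_def)
  have A: "dLi L B \<omega> (x+1) j" using R x by (simp add: dLi_eq)
  have ps: "pos L B \<omega> (Suc t) = (x+1, j)"
  proof (rule ccontr)
    assume "pos L B \<omega> (Suc t) \<noteq> (x+1, j)"
    then have "\<not> dLi L B \<omega> (x+1) j" using inv[of B L \<omega> "Suc t"] nB tt j by auto
    then show False using A by simp
  qed
  obtain a b where p: "pos L B \<omega> t = (a, b)" by (cases "pos L B \<omega> t")
  have ab: "1 \<le> a" "1 \<le> b" using pos_diag[of L B \<omega> t] p by auto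
  have m: "mv L B \<omega> t"
  proof (rule ccontr)
    assume nm: "\<not> mv L B \<omega> t"
    then have "pos L B \<omega> (Suc t) = (a, b+1)" using p by (simp add: mv_def)
    then have e: "a = x+1" "b + 1 = j" using ps by auto
    have "dU L B \<omega> a b" using ex1_at[of B L \<omega> t] nB nm p by (simp add: mv_def)
    then have "dBi L B \<omega> (x+1) j" using e nB ab by (auto simp: dBi_eq)
    then show False using inv[of B L \<omega> "Suc t"] nB ps A by simp
  qed
  then have "pos L B \<omega> (Suc t) = (a+1, b)" using p by (simp add: mv_def)
  then show ?thesis using ps p m by (simp add: t_def)
qed

lemma card_less_Suc: "card {s. s < Suc t \<and> P s} = card {s. s < t \<and> P s} + (if P t then 1 else 0)"
proof -
  have "{s. s < Suc t \<and> P s} = (if P t then insert t {s. s < t \<and> P s} else {s. s < t \<and> P s})"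
    by (auto simp: less_Suc_eq)
  then show ?thesis by simp
qed

lemma pos_count: "pos L B \<omega> t = (1 + card {s. s < t \<and> mv L B \<omega> s}, 1 + card {s. s < t \<and> \<not> mv L B \<omega> s})"
proof (induction t)
  case 0 then show ?case by simp
next
  case (Suc t) then show ?case by (simp add: card_less_Suc mv_def)
qed

lemma comb: "card {s. s < Suc t \<and> m s} \<le> card {s. 1 \<le> s \<and> s < Suc t \<and> m (s-1) \<and> m s} + card {s. s < Suc t \<and> \<not> m s} + (if m t then 1 else 0)"
proof (induction t)
  case 0
  have "{s. s < Suc 0 \<and> m s} \<subseteq> {0}" by auto
  then have "card {s. s < Suc 0 \<and> m s} \<le> 1" using card_mono[of "{0::nat}"] by fastforce
  moreover have "\<not> m 0 \<Longrightarrow> {s. s < Suc 0 \<and> m s} = {}" by auto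
  moreover have "\<not> m 0 \<Longrightarrow> {s. s < Suc 0 \<and> \<not> m s} = {0}" by auto
  ultimately show ?case by (cases "m 0") auto
next
  case (Suc t)
  have e: "{s. 1 \<le> s \<and> s < Suc (Suc t) \<and> m (s-1) \<and> m s} = (if m t \<and> m (Suc t) then insert (Suc t) {s. 1 \<le> s \<and> s < Suc t \<and> m (s-1) \<and> m s} else {s. 1 \<le> s \<and> s < Suc t \<and> m (s-1) \<and> m s})"
    by (auto simp: less_Suc_eq)
  show ?case using Suc.IH unfolding e card_less_Suc[of "Suc t"] by (auto simp: card_less_Suc[of t])
qed

definition Ycnt where "Ycnt L B \<omega> T = card {s. s < T \<and> (fst (\<omega> (pos L B \<omega> s)) \<or> snd (\<omega> (pos L B \<omega> s)))}"

lemma event_count: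
  assumes nB: "\<not> B 1" and R: "dR L B \<omega> x j" and j: "1 \<le> j" and jx: "j < x"
  shows "x - j \<le> Ycnt L B \<omega> (2 * x)"
proof -
  define t where "t = x + j - 2"
  have h: "pos L B \<omega> t = (x, j)" "mv L B \<omega> t" using hit[OF nB R j] jx by (auto simp: t_def)
  have "pos L B \<omega> (Suc t) = (x + 1, j)" using h by (simp add: mv_def)
  then have c: "x = card {s. s < Suc t \<and> mv L B \<omega> s}" "j = 1 + card {s. s < Suc t \<and> \<not> mv L B \<omega> s}"
    using pos_count[of L B \<omega> "Suc t"] by auto
  have "x \<le> card {s. 1 \<le> s \<and> s < Suc t \<and> mv L B \<omega> (s-1) \<and> mv L B \<omega> s} + j"
    using comb[of t "mv L B \<omega>"] c h by simp
  moreover have "card {s. 1 \<le> s \<and> s < Suc t \<and> mv L B \<omega> (s-1) \<and> mv L B \<omega> s} \<le> Ycnt L B \<omega> (2 * x)"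
    unfolding Ycnt_def
  proof (rule card_mono)
    show "finite {s. s < 2 * x \<and> (fst (\<omega> (pos L B \<omega> s)) \<or> snd (\<omega> (pos L B \<omega> s)))}" by simp
    show "{s. 1 \<le> s \<and> s < Suc t \<and> mv L B \<omega> (s-1) \<and> mv L B \<omega> s} \<subseteq> {s. s < 2 * x \<and> (fst (\<omega> (pos L B \<omega> s)) \<or> snd (\<omega> (pos L B \<omega> s)))}"
    proof
      fix s assume "s \<in> {s. 1 \<le> s \<and> s < Suc t \<and> mv L B \<omega> (s-1) \<and> mv L B \<omega> s}"
      then have s: "1 \<le> s" "s < Suc t" "mv L B \<omega> (s-1)" "mv L B \<omega> s" by auto
      have s2: "s < 2 * x" using s jx by (simp add: t_def)
      obtain a b where p: "pos L B \<omega> (s-1) = (a, b)" by (cases "pos L B \<omega> (s-1)")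
      have ab: "1 \<le> a" using pos_diag[of L B \<omega> "s-1"] p by auto
      have ps: "pos L B \<omega> s = (a+1, b)" using pos.simps(2)[of L B \<omega> "s-1"] s p by (simp add: mv_def)
      have dl: "dLi L B \<omega> (a+1) b" using s(3) p ab by (simp add: mv_def dLi_eq)
      have db: "\<not> dBi L B \<omega> (a+1) b" using inv[of B L \<omega> s] nB ps dl by simp
      have "dR L B \<omega> (a+1) b" using s(4) ps by (simp add: mv_def)
      then have "fst (\<omega> (a+1, b)) \<or> snd (\<omega> (a+1, b))" using single dl db by blast
      then show "s \<in> {s. s < 2 * x \<and> (fst (\<omega> (pos L B \<omega> s)) \<or> snd (\<omega> (pos L B \<omega> s)))}" using ps s2 by simp
    qed
  qed
  ultimately show ?thesis by linarith
qed



lemma meas_fin: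
  fixes f :: "('i \<Rightarrow> 'a::finite) \<Rightarrow> 'b" and p :: "'a pmf"
  assumes J: "finite J" and dep: "\<And>\<omega> \<omega>'. (\<forall>i\<in>J. \<omega> i = \<omega>' i) \<Longrightarrow> f \<omega> = f \<omega>'"
    and sp: "\<And>\<omega>. f \<omega> \<in> space N"
  shows "f \<in> measurable (PiM UNIV (\<lambda>_. measure_pmf p)) N"
proof -
  let ?P = "PiM UNIV (\<lambda>_. measure_pmf p)"
  let ?A = "PiE J (\<lambda>_. UNIV :: 'a set)"
  have fin: "finite ?A" using J by (intro finite_PiE) auto
  have R: "(\<lambda>\<omega>. restrict \<omega> J) \<in> measurable ?P (count_space ?A)"
    unfolding measurable_count_space_eq2[OF fin]
  proof safe
    fix a assume a: "a \<in> ?A"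
    have "(\<lambda>\<omega>. restrict \<omega> J) -` {a} \<inter> space ?P = {\<omega> \<in> space ?P. \<forall>i\<in>J. \<omega> i = a i}"
      using a by (auto simp: restrict_def PiE_def extensional_def fun_eq_iff)
    also have "\<dots> \<in> sets ?P"
    proof (rule sets.sets_Collect_finite_All[OF _ J])
      fix i :: 'i
      have "(\<lambda>\<omega>. \<omega> i) \<in> measurable ?P (measure_pmf p)" by (rule measurable_component_singleton) simp
      then have "(\<lambda>\<omega>. \<omega> i) -` {a i} \<inter> space ?P \<in> sets ?P" by (rule measurable_sets) simp
      moreover have "(\<lambda>\<omega>. \<omega> i) -` {a i} \<inter> space ?P = {\<omega> \<in> space ?P. \<omega> i = a i}" by auto
      ultimately show "{\<omega> \<in> space ?P. \<omega> i = a i} \<in> sets ?P" by simp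
    qed
    finally show "(\<lambda>\<omega>. restrict \<omega> J) -` {a} \<inter> space ?P \<in> sets ?P" .
  qed auto
  have F: "f \<in> measurable (count_space ?A) N" using sp by auto
  have "(\<lambda>\<omega>. f (restrict \<omega> J)) \<in> measurable ?P N" using measurable_compose[OF R F] by simp
  moreover have "f (restrict \<omega> J) = f \<omega>" for \<omega> by (rule dep) simp
  ultimately show ?thesis by simp
qed

lemma indep_coord:
  fixes g :: "('i \<Rightarrow> 'a) \<Rightarrow> ennreal" and p :: "'a pmf" and h :: "'a \<Rightarrow> ennreal"
  assumes g: "g \<in> borel_measurable (PiM UNIV (\<lambda>_. measure_pmf p))"
    and inv: "\<And>w y. g (w(v := y)) = g w"
  shows "(\<integral>\<^sup>+\<omega>. g \<omega> * h (\<omega> v) \<partial>PiM UNIV (\<lambda>_. measure_pmf p))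
       = (\<integral>\<^sup>+\<omega>. g \<omega> \<partial>PiM UNIV (\<lambda>_. measure_pmf p)) * (\<integral>\<^sup>+c. h c \<partial>measure_pmf p)"
proof -
  let ?M = "\<lambda>_::'i. measure_pmf p"
  let ?I = "UNIV - {v}"
  let ?T = "\<lambda>(x, X). (X :: 'i \<Rightarrow> 'a)(v := x)"
  interpret I: prob_space "PiM ?I ?M" by (intro prob_space_PiM) (simp add: prob_space_measure_pmf)
  have ins: "insert v ?I = UNIV" by auto
  have D: "distr (measure_pmf p \<Otimes>\<^sub>M PiM ?I ?M) (PiM UNIV ?M) ?T = PiM UNIV ?M"
    using distr_pair_PiM_eq_PiM[of ?I ?M v] by (simp add: ins prob_space_measure_pmf)
  have T: "?T \<in> measurable (measure_pmf p \<Otimes>\<^sub>M PiM ?I ?M) (PiM UNIV ?M)"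
  proof (rule measurable_PiM_single')
    fix i :: 'i
    show "(\<lambda>\<omega>. ?T \<omega> i) \<in> measurable (measure_pmf p \<Otimes>\<^sub>M PiM ?I ?M) (measure_pmf p)"
    proof (cases "i = v")
      case True
      then have "(\<lambda>\<omega>. ?T \<omega> i) = fst" by auto
      then show ?thesis by simp
    next
      case False
      then have "(\<lambda>\<omega>. ?T \<omega> i) = (\<lambda>\<omega>. snd \<omega> i)" by auto
      moreover have "(\<lambda>\<omega>. snd \<omega> i) \<in> measurable (measure_pmf p \<Otimes>\<^sub>M PiM ?I ?M) (measure_pmf p)"
        using False by (intro measurable_compose[OF measurable_snd] measurable_component_singleton) auto
      ultimately show ?thesis by simp
    qed
  qed (auto simp: space_PiM)
  have key: "(\<integral>\<^sup>+\<omega>. g \<omega> * h (\<omega> v) \<partial>PiM UNIV ?M) = (\<integral>\<^sup>+\<omega>. g \<omega> \<partial>PiM ?I ?M) * (\<integral>\<^sup>+c. h c \<partial>measure_pmf p)"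
    for h :: "'a \<Rightarrow> ennreal"
  proof -
    have hm: "(\<lambda>\<omega>. g \<omega> * h (\<omega> v)) \<in> borel_measurable (PiM UNIV ?M)"
    proof -
      have "(\<lambda>\<omega>. h (\<omega> v)) \<in> borel_measurable (PiM UNIV ?M)"
        using measurable_compose[OF measurable_component_singleton[of v UNIV ?M], of h borel] by simp
      then show ?thesis using g by measurable
    qed
    have "(\<integral>\<^sup>+\<omega>. g \<omega> * h (\<omega> v) \<partial>PiM UNIV ?M)
        = (\<integral>\<^sup>+y. g (?T y) * h (?T y v) \<partial>(measure_pmf p \<Otimes>\<^sub>M PiM ?I ?M))"
      by (subst D[symmetric], subst nn_integral_distr[OF T]) (use hm D in simp_all)
    also have "\<dots> = (\<integral>\<^sup>+x. \<integral>\<^sup>+X. g (X(v := x)) * h x \<partial>PiM ?I ?M \<partial>measure_pmf p)"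
    proof (subst I.nn_integral_fst[symmetric])
      show "(\<lambda>y. g (?T y) * h (?T y v)) \<in> borel_measurable (measure_pmf p \<Otimes>\<^sub>M PiM ?I ?M)"
        using measurable_compose[OF T hm] by (simp add: case_prod_beta)
    qed simp
    also have "\<dots> = (\<integral>\<^sup>+x. (\<integral>\<^sup>+X. g X \<partial>PiM ?I ?M) * h x \<partial>measure_pmf p)"
    proof (rule nn_integral_cong)
      fix x
      have gm: "(\<lambda>X. g (X(v := x))) \<in> borel_measurable (PiM ?I ?M)"
        using measurable_Pair2[OF measurable_compose[OF T g], of x] by simp
      have eq2: "g (X(v := x)) = g X" for X
      proof -
        have "g (X(v := x)) = g ((X(v := x))(v := X v))" by (rule inv[symmetric])
        then show "g (X(v := x)) = g X" by simp
      qed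
      have gm2: "g \<in> borel_measurable (PiM ?I ?M)" using gm by (simp add: eq2)
      have "(\<integral>\<^sup>+X. g (X(v := x)) * h x \<partial>PiM ?I ?M) = (\<integral>\<^sup>+X. g X * h x \<partial>PiM ?I ?M)"
        by (simp add: eq2)
      also have "\<dots> = (\<integral>\<^sup>+X. g X \<partial>PiM ?I ?M) * h x"
        by (rule nn_integral_multc[OF gm2])
      finally show "(\<integral>\<^sup>+X. g (X(v := x)) * h x \<partial>PiM ?I ?M) = (\<integral>\<^sup>+X. g X \<partial>PiM ?I ?M) * h x" .
    qed
    also have "\<dots> = (\<integral>\<^sup>+X. g X \<partial>PiM ?I ?M) * (\<integral>\<^sup>+c. h c \<partial>measure_pmf p)"
      by (rule nn_integral_cmult) simp
    finally show ?thesis .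
  qed
  have "(\<integral>\<^sup>+\<omega>. g \<omega> \<partial>PiM UNIV ?M) = (\<integral>\<^sup>+\<omega>. g \<omega> \<partial>PiM ?I ?M)"
    using key[of "\<lambda>_. 1"] by (simp add: measure_pmf.emeasure_space_1)
  then show ?thesis using key[of h] by simp
qed



definition agree :: "nat \<Rightarrow> (nat \<times> nat \<Rightarrow> bool \<times> bool) \<Rightarrow> (nat \<times> nat \<Rightarrow> bool \<times> bool) \<Rightarrow> bool" where
  "agree n w w' = (\<forall>a b. a + b \<le> n \<longrightarrow> w (a,b) = w' (a,b))"

lemma agree_mono: "agree n w w' \<Longrightarrow> m \<le> n \<Longrightarrow> agree m w w'"
  by (auto simp: agree_def)

lemma out_loc: "agree n w w' \<Longrightarrow> i + j \<le> n \<Longrightarrow> s6v_out L B w i j = s6v_out L B w' i j"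
proof (induction "i+j" arbitrary: i j rule: less_induct)
  case less
  have l: "lin L B w i j = lin L B w' i j"
    using less(1)[of "i-1" j] less(2,3) by (simp add: lin_def)
  have b: "bin L B w i j = bin L B w' i j"
    using less(1)[of i "j-1"] less(2,3) by (simp add: bin_def)
  have "w (i,j) = w' (i,j)" using less(2,3) by (simp add: agree_def)
  then show ?case by (subst (1 2) out_eq) (simp add: l b)
qed

lemma dR_loc: "agree n w w' \<Longrightarrow> i + j \<le> n \<Longrightarrow> dR L B w i j = dR L B w' i j"
  using out_loc[of n w w' i j L B] out_loc[of n w w' i j L "B(1:=True)"] by (simp add: dR_def)

lemma pos_loc: "agree (t+1) w w' \<Longrightarrow> pos L B w t = pos L B w' t"
proof (induction t)
  case 0 then show ?case by simp
next
  case (Suc t)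
  have e: "pos L B w t = pos L B w' t" using Suc agree_mono[of "Suc t + 1" w w' "t+1"] by simp
  have "fst (pos L B w t) + snd (pos L B w t) \<le> Suc t + 1" using pos_diag[of L B w t] by simp
  then have "dR L B w (fst (pos L B w t)) (snd (pos L B w t)) = dR L B w' (fst (pos L B w t)) (snd (pos L B w t))"
    using dR_loc Suc.prems by blast
  then show ?case using e by simp
qed

lemma Ycnt_loc: "agree (T+1) w w' \<Longrightarrow> Ycnt L B w T = Ycnt L B w' T"
proof -
  assume a: "agree (T+1) w w'"
  have "s < T \<Longrightarrow> (fst (w (pos L B w s)) \<or> snd (w (pos L B w s))) = (fst (w' (pos L B w' s)) \<or> snd (w' (pos L B w' s)))" for s
  proof -
    assume s: "s < T"
    have e: "pos L B w s = pos L B w' s" using pos_loc agree_mono[OF a, of "s+1"] s by simp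
    have "fst (pos L B w s) + snd (pos L B w s) \<le> T + 1" using pos_diag[of L B w s] s by simp
    then have "w (pos L B w s) = w' (pos L B w s)" using a by (cases "pos L B w s") (simp add: agree_def)
    then show ?thesis using e by simp
  qed
  then show ?thesis unfolding Ycnt_def by (metis (lifting))
qed

lemma agree_fin: "finite {(a, b). a + b \<le> (n::nat)}"
  by (rule finite_subset[of _ "{..n} \<times> {..n}"]) auto

lemma agree_iff: "agree n w w' \<longleftrightarrow> (\<forall>i\<in>{(a, b). a + b \<le> n}. w i = w' i)"
  by (auto simp: agree_def)

lemma meas_agree:
  fixes f :: "(nat \<times> nat \<Rightarrow> bool \<times> bool) \<Rightarrow> 'b"
  assumes "\<And>w w'. agree n w w' \<Longrightarrow> f w = f w'" "\<And>w. f w \<in> space N"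
  shows "f \<in> measurable (PiM UNIV (\<lambda>_. measure_pmf p)) N"
  by (rule meas_fin[OF agree_fin[of n]]) (use assms agree_iff in auto)

definition hh :: "bool \<times> bool \<Rightarrow> ennreal" where
  "hh c = ennreal (if fst c \<or> snd c then exp 1 else 1)"

lemma Phi_step:
  fixes p :: "(bool \<times> bool) pmf"
  shows "(\<integral>\<^sup>+w. ennreal (exp 1 ^ Ycnt L B w (Suc T)) \<partial>PiM UNIV (\<lambda>_. measure_pmf p))
       = (\<integral>\<^sup>+w. ennreal (exp 1 ^ Ycnt L B w T) \<partial>PiM UNIV (\<lambda>_. measure_pmf p)) * (\<integral>\<^sup>+c. hh c \<partial>measure_pmf p)"
proof -
  let ?M = "PiM UNIV (\<lambda>_. measure_pmf p)"
  define D where "D = {(a, b). a \<le> (T::nat) + 2 \<and> b \<le> T + 2 \<and> a + b = T + 2}"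
  have finD: "finite D" by (rule finite_subset[of _ "{..T+2} \<times> {..T+2}"]) (auto simp: D_def)
  have posD: "pos L B w T \<in> D" for w using pos_diag[of L B w T] by (cases "pos L B w T") (auto simp: D_def)
  define G where "G v w = (if v = pos L B w T then ennreal (exp 1 ^ Ycnt L B w T) else 0)" for v w
  have split1: "ennreal (exp 1 ^ Ycnt L B w (Suc T)) = (\<Sum>v\<in>D. G v w * hh (w v))" for w
  proof -
    have "(\<Sum>v\<in>D. G v w * hh (w v)) = (\<Sum>v\<in>D. if v = pos L B w T then ennreal (exp 1 ^ Ycnt L B w T) * hh (w v) else 0)"
      by (rule sum.cong) (auto simp: G_def)
    also have "\<dots> = ennreal (exp 1 ^ Ycnt L B w T) * hh (w (pos L B w T))"
      using finD posD[of w] by (subst sum.delta) auto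
    also have "\<dots> = ennreal (exp 1 ^ Ycnt L B w (Suc T))"
      by (simp add: hh_def Ycnt_def card_less_Suc ennreal_mult[symmetric] mult.commute)
    finally show ?thesis by simp
  qed
  have split0: "ennreal (exp 1 ^ Ycnt L B w T) = (\<Sum>v\<in>D. G v w)" for w
    using finD posD[of w] by (simp add: G_def sum.delta)
  have Gm: "G v \<in> borel_measurable ?M" for v
  proof (rule meas_agree[of "T+1"])
    fix w w' assume "agree (T+1) w w'"
    then show "G v w = G v w'" using pos_loc[of T w w' L B] Ycnt_loc[of T w w' L B] by (simp add: G_def)
  qed simp
  have Gi: "G v (w(v := y)) = G v w" if "v \<in> D" for v w y
  proof -
    have "agree (T+1) (w(v := y)) w" using that by (auto simp: agree_def D_def)
    then have e1: "pos L B (w(v := y)) T = pos L B w T" and e2: "Ycnt L B (w(v := y)) T = Ycnt L B w T"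
      using pos_loc[of T "w(v := y)" w L B] Ycnt_loc[of T "w(v := y)" w L B] by auto
    show ?thesis unfolding G_def by (simp only: e1 e2)
  qed
  have GHm: "(\<lambda>w. G v w * hh (w v)) \<in> borel_measurable ?M" if "v \<in> D" for v
  proof (rule meas_agree[of "T+2"])
    fix w w' assume a: "agree (T+2) w w'"
    then have "G v w = G v w'" using pos_loc[of T w w' L B] Ycnt_loc[of T w w' L B] agree_mono[OF a, of "T+1"]
      by (simp add: G_def)
    moreover have "w v = w' v" using a that by (auto simp: agree_def D_def)
    ultimately show "G v w * hh (w v) = G v w' * hh (w' v)" by simp
  qed simp
  have "(\<integral>\<^sup>+w. ennreal (exp 1 ^ Ycnt L B w (Suc T)) \<partial>?M) = (\<integral>\<^sup>+w. (\<Sum>v\<in>D. G v w * hh (w v)) \<partial>?M)"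
    by (simp add: split1)
  also have "\<dots> = (\<Sum>v\<in>D. \<integral>\<^sup>+w. G v w * hh (w v) \<partial>?M)"
    by (rule nn_integral_sum) (use GHm in auto)
  also have "\<dots> = (\<Sum>v\<in>D. (\<integral>\<^sup>+w. G v w \<partial>?M) * (\<integral>\<^sup>+c. hh c \<partial>measure_pmf p))"
    by (rule sum.cong[OF refl], rule indep_coord[OF Gm]) (use Gi in auto)
  also have "\<dots> = (\<Sum>v\<in>D. \<integral>\<^sup>+w. G v w \<partial>?M) * (\<integral>\<^sup>+c. hh c \<partial>measure_pmf p)"
    by (simp add: sum_distrib_right)
  also have "(\<Sum>v\<in>D. \<integral>\<^sup>+w. G v w \<partial>?M) = (\<integral>\<^sup>+w. (\<Sum>v\<in>D. G v w) \<partial>?M)"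
    by (rule nn_integral_sum[symmetric]) (use Gm in auto)
  also have "\<dots> = (\<integral>\<^sup>+w. ennreal (exp 1 ^ Ycnt L B w T) \<partial>?M)"
    by (simp add: split0)
  finally show ?thesis .
qed



lemma H_bound:
  fixes d1 d2 :: real
  assumes "0 \<le> d2" "d2 \<le> d1" "d1 \<le> 1"
  shows "(\<integral>\<^sup>+c. hh c \<partial>measure_pmf (pair_pmf (bernoulli_pmf d1) (bernoulli_pmf d2))) \<le> ennreal (1 + 2 * (exp 1 - 1) * d1)"
proof -
  let ?p = "pair_pmf (bernoulli_pmf d1) (bernoulli_pmf d2)"
  have "(\<integral>\<^sup>+c. hh c \<partial>measure_pmf ?p) = (\<Sum>c\<in>UNIV. hh c * pmf ?p c)"
    by (rule nn_integral_measure_pmf_support) auto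
  also have U: "(UNIV :: (bool \<times> bool) set) = {(True,True),(True,False),(False,True),(False,False)}" by auto
  have "(\<Sum>c\<in>UNIV. hh c * pmf ?p c) = ennreal (exp 1 * d1 * d2 + exp 1 * d1 * (1 - d2) + exp 1 * (1 - d1) * d2 + (1 - d1) * (1 - d2))"
    using assms
    by (simp add: U hh_def pmf_pair ennreal_mult[symmetric] ennreal_plus[symmetric] del: ennreal_plus)
  also have "\<dots> \<le> ennreal (1 + 2 * (exp 1 - 1) * d1)"
  proof (rule ennreal_leI)
    have "exp 1 * d1 * d2 + exp 1 * d1 * (1 - d2) + exp 1 * (1 - d1) * d2 + (1 - d1) * (1 - d2)
        = 1 + (exp 1 - 1) * (d1 + d2 - d1 * d2)" by (simp add: algebra_simps)
    also have "\<dots> \<le> 1 + (exp 1 - 1) * (2 * d1)"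
    proof -
      have "d1 + d2 - d1 * d2 \<le> 2 * d1" using assms mult_nonneg_nonneg[of d1 d2] by linarith
      moreover have "0 \<le> exp 1 - (1::real)" by simp
      ultimately show ?thesis by (simp add: mult_left_mono)
    qed
    finally show "exp 1 * d1 * d2 + exp 1 * d1 * (1 - d2) + exp 1 * (1 - d1) * d2 + (1 - d1) * (1 - d2) \<le> 1 + 2 * (exp 1 - 1) * d1"
      by (simp add: algebra_simps)
  qed
  finally show ?thesis .
qed

lemma Phi_bound:
  fixes d1 d2 :: real
  assumes "0 \<le> d2" "d2 \<le> d1" "d1 \<le> 1"
  shows "(\<integral>\<^sup>+w. ennreal (exp 1 ^ Ycnt L B w T) \<partial>s6v_space d1 d2) \<le> ennreal ((1 + 2 * (exp 1 - 1) * d1) ^ T)"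
proof (induction T)
  case 0
  interpret prob_space "s6v_space d1 d2" unfolding s6v_space_def
    by (intro prob_space_PiM) (simp add: prob_space_measure_pmf)
  show ?case by (simp add: Ycnt_def emeasure_space_1)
next
  case (Suc T)
  have q: "0 \<le> 1 + 2 * (exp 1 - 1) * d1" using assms by simp
  have "(\<integral>\<^sup>+w. ennreal (exp 1 ^ Ycnt L B w (Suc T)) \<partial>s6v_space d1 d2)
     = (\<integral>\<^sup>+w. ennreal (exp 1 ^ Ycnt L B w T) \<partial>s6v_space d1 d2) * (\<integral>\<^sup>+c. hh c \<partial>measure_pmf (pair_pmf (bernoulli_pmf d1) (bernoulli_pmf d2)))"
    unfolding s6v_space_def by (rule Phi_step)
  also have "\<dots> \<le> ennreal ((1 + 2 * (exp 1 - 1) * d1) ^ T) * ennreal (1 + 2 * (exp 1 - 1) * d1)"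
    by (rule mult_mono'[OF Suc.IH H_bound[OF assms]]) auto
  also have "\<dots> = ennreal ((1 + 2 * (exp 1 - 1) * d1) ^ Suc T)"
    using q by (simp add: ennreal_mult[symmetric] mult.commute)
  finally show ?case .
qed

theorem proposition5p8:
  fixes d1 d2 :: real
  assumes "0 < d2" and "d2 < d1" and "d1 < 1"
  shows "\<exists>C c. C > 0 \<and> c > 0 \<and>
    (\<forall>(L :: nat \<Rightarrow> bool) (B :: nat \<Rightarrow> bool) (x :: nat) (k :: real).
       \<not> B 1 \<and> x > 10 \<and> k \<ge> 100 * real x * d1 \<longrightarrow>
       measure (s6v_space d1 d2)
         {\<omega> \<in> space (s6v_space d1 d2). \<exists>j. sc_right_edge L B \<omega> x j \<and> real j \<le> real x - k}
       \<le> C * exp (- c * k))"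
proof -
  have main: "measure (s6v_space d1 d2) {\<omega> \<in> space (s6v_space d1 d2). \<exists>j. sc_right_edge L B \<omega> x j \<and> real j \<le> real x - k}
       \<le> 1 * exp (- (1/2) * k)"
    if a: "\<not> B 1 \<and> x > 10 \<and> k \<ge> 100 * real x * d1" for L B :: "nat \<Rightarrow> bool" and x :: nat and k :: real
  proof -
  from a have nB: "\<not> B 1" and x: "x > 10" and kx: "k \<ge> 100 * real x * d1" by auto
  let ?M = "s6v_space d1 d2"
  interpret prob_space ?M unfolding s6v_space_def
    by (intro prob_space_PiM) (simp add: prob_space_measure_pmf)
  have "0 < 100 * real x * d1" using x assms(1,2) by simp
  then have kpos: "0 < k" using kx by linarith
  define E where "E = {\<omega> \<in> space ?M. \<exists>j. sc_right_edge L B \<omega> x j \<and> real j \<le> real x - k}"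
  define S where "S = {\<omega> \<in> space ?M. k \<le> real (Ycnt L B \<omega> (2 * x))}"
  have ES: "E \<subseteq> S"
  proof
    fix \<omega> assume "\<omega> \<in> E"
    then obtain j where sp: "\<omega> \<in> space ?M" and sc: "sc_right_edge L B \<omega> x j" and jk: "real j \<le> real x - k"
      by (auto simp: E_def)
    have j1: "1 \<le> j" and R: "dR L B \<omega> x j" using sc by (auto simp: sc_right_edge_def dR_def)
    have jx: "j < x" using jk kpos by simp
    have "x - j \<le> Ycnt L B \<omega> (2 * x)" by (rule event_count[OF nB R j1 jx])
    then have "real x - real j \<le> real (Ycnt L B \<omega> (2 * x))" using jx by linarith
    then show "\<omega> \<in> S" using sp jk by (simp add: S_def)
  qed
  have Sm: "S \<in> sets ?M"
  proof -
    have "(\<lambda>\<omega>. k \<le> real (Ycnt L B \<omega> (2 * x))) \<in> measurable ?M (count_space UNIV)"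
      unfolding s6v_space_def
    proof (rule meas_agree[of "2 * x + 1"])
      fix w w' assume "agree (2 * x + 1) w w'"
      then show "(k \<le> real (Ycnt L B w (2 * x))) = (k \<le> real (Ycnt L B w' (2 * x)))"
        using Ycnt_loc[of "2 * x" w w' L B] by simp
    qed simp
    from measurable_sets[OF this, of "{True}"]
    have "(\<lambda>\<omega>. k \<le> real (Ycnt L B \<omega> (2 * x))) -` {True} \<inter> space ?M \<in> sets ?M" by simp
    moreover have "(\<lambda>\<omega>. k \<le> real (Ycnt L B \<omega> (2 * x))) -` {True} \<inter> space ?M = S" by (auto simp: S_def)
    ultimately show ?thesis by simp
  qed
  have mE: "measure ?M E \<le> measure ?M S"
  proof (cases "E \<in> sets ?M")
    case True then show ?thesis using ES Sm by (intro finite_measure_mono)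
  next
    case False then show ?thesis by (simp add: measure_notin_sets)
  qed
  define q where "q = 1 + 2 * (exp 1 - 1) * d1"
  have q0: "0 \<le> q" using assms by (simp add: q_def)
  have "ennreal (exp k) * emeasure ?M S = (\<integral>\<^sup>+\<omega>. ennreal (exp k) * indicator S \<omega> \<partial>?M)"
    by (rule nn_integral_cmult_indicator[OF Sm, symmetric])
  also have "\<dots> \<le> (\<integral>\<^sup>+\<omega>. ennreal (exp 1 ^ Ycnt L B \<omega> (2 * x)) \<partial>?M)"
  proof (rule nn_integral_mono)
    fix \<omega>
    show "ennreal (exp k) * indicator S \<omega> \<le> ennreal (exp 1 ^ Ycnt L B \<omega> (2 * x))"
    proof (cases "\<omega> \<in> S")
      case True
      then have "exp k \<le> exp (real (Ycnt L B \<omega> (2 * x)))" by (simp add: S_def)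
      also have "\<dots> = exp 1 ^ Ycnt L B \<omega> (2 * x)" using exp_of_nat_mult[of "Ycnt L B \<omega> (2 * x)" 1] by simp
      finally show ?thesis using True by (simp add: ennreal_leI)
    qed simp
  qed
  also have "\<dots> \<le> ennreal (q ^ (2 * x))"
    unfolding q_def by (rule Phi_bound) (use assms in auto)
  finally have ineq: "ennreal (exp k) * emeasure ?M S \<le> ennreal (q ^ (2 * x))" .
  have mS: "measure ?M S \<le> q ^ (2 * x) / exp k"
  proof -
    have "ennreal (exp k * measure ?M S) \<le> ennreal (q ^ (2 * x))"
      using ineq by (simp add: emeasure_eq_measure ennreal_mult[symmetric])
    then have "exp k * measure ?M S \<le> q ^ (2 * x)"
      using q0 by (simp add: ennreal_le_iff)
    then show ?thesis by (simp add: pos_le_divide_eq mult.commute)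
  qed
  have "q \<le> exp (2 * (exp 1 - 1) * d1)" unfolding q_def by (rule exp_ge_add_one_self)
  then have "q ^ (2 * x) \<le> exp (2 * (exp 1 - 1) * d1) ^ (2 * x)" using q0 by (rule power_mono)
  also have "\<dots> = exp (real (2 * x) * (2 * (exp 1 - 1) * d1))" by (rule exp_of_nat_mult[symmetric])
  also have "\<dots> \<le> exp (k / 2)"
  proof -
    have e: "exp 1 < (272/100::real)" by (rule e_less_272)
    have "real (2 * x) * (2 * (exp 1 - 1) * d1) = 4 * (exp 1 - 1) * (real x * d1)" by simp
    also have "\<dots> \<le> 4 * (272/100 - 1) * (real x * d1)"
      using e assms x by (intro mult_right_mono) auto
    also have "\<dots> \<le> k / 2"
    proof -
      have "0 \<le> real x * d1" using assms by simp
      moreover have "100 * real x * d1 = 100 * (real x * d1)" by simp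
      moreover have "4 * (272/100 - 1) * (real x * d1) = (688/100) * (real x * d1)" by simp
      ultimately show ?thesis using kx by linarith
    qed
    finally show ?thesis by simp
  qed
  finally have "q ^ (2 * x) / exp k \<le> exp (k / 2) / exp k" by (simp add: divide_right_mono)
  also have "\<dots> = exp (k / 2 - k)" by (rule exp_diff[symmetric])
  also have "\<dots> = 1 * exp (- (1/2) * k)" by simp
  finally have "q ^ (2 * x) / exp k \<le> 1 * exp (- (1/2) * k)" .
  then have fin: "measure ?M E \<le> 1 * exp (- (1/2) * k)" using mE mS by linarith
  show "measure ?M {\<omega> \<in> space ?M. \<exists>j. sc_right_edge L B \<omega> x j \<and> real j \<le> real x - k} \<le> 1 * exp (- (1/2) * k)"
    using fin by (simp only: E_def)
qed
  show ?thesis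
    by (rule exI[of _ 1], rule exI[of _ "1/2"]) (use main in auto)
qed

end
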